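(* (1) For every packed word $g$, $g\leq\mathrm{Std}(g)$. (2) If $f,g$ are packed words with $f\leq g$, then $\mathrm{Std}(f)=\mathrm{Std}(g)$.
   Context: $[n]=\{1,\ldots,n\}$. A packed word of length $n$ is a word $f=f(1)\ldots f(n)$ of positive integers with $\{f(1),\ldots,f(n)\}=[\max f]$. For packed words $f,g$ of the same length $n$, $g\leq f$ means: for all $i,j\in[n]$, $f(i)\leq f(j)\Rightarrow g(i)\leq g(j)$; $f(i)>f(j)$ and $i<j\Rightarrow g(i)>g(j)$; $f(i)=f(j)\Rightarrow g(i)=g(j)$. The standardization $\mathrm{Std}(f)$ of a packed word $f$ of length $n$ is the unique permutation $\sigma$ of $[n]$ (viewed as the packed word $\sigma(1)\ldots\sigma(n)$) such that for all $i,j$: $f(i)<f(j)\Rightarrow\sigma(i)<\sigma(j)$, and ($f(i)=f(j)$ and $i<j$) $\Rightarrow\sigma(i)<\sigma(j)$. *)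

theory Defs
  imports Main
begin

text \<open>Words are lists of naturals; position i of the paper corresponds to list index i-1.\<close>

definition packed :: "nat list \<Rightarrow> bool" where
  "packed f \<longleftrightarrow> (\<exists>m. set f = {1..m})"

definition pw_le :: "nat list \<Rightarrow> nat list \<Rightarrow> bool" where
  "pw_le g f \<longleftrightarrow> length g = length f \<and>
     (\<forall>i<length f. \<forall>j<length f.
        (f ! i \<le> f ! j \<longrightarrow> g ! i \<le> g ! j) \<and>
        (f ! i > f ! j \<and> i < j \<longrightarrow> g ! i > g ! j) \<and>
        (f ! i = f ! j \<longrightarrow> g ! i = g ! j))"

definition is_std :: "nat list \<Rightarrow> nat list \<Rightarrow> bool" where
  "is_std f s \<longleftrightarrow> length s = length f \<and> set s = {1..length f} \<and>
     (\<forall>i<length f. \<forall>j<length f.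
        (f ! i < f ! j \<longrightarrow> s ! i < s ! j) \<and>
        (f ! i = f ! j \<and> i < j \<longrightarrow> s ! i < s ! j))"

definition Std :: "nat list \<Rightarrow> nat list" where
  "Std f = (THE s. is_std f s)"

end

theory Submission
  imports Defs
begin

definition lt :: "nat list \<Rightarrow> nat \<Rightarrow> nat \<Rightarrow> bool" where
  "lt f k i \<longleftrightarrow> f ! k < f ! i \<or> (f ! k = f ! i \<and> k < i)"

definition rk :: "nat list \<Rightarrow> nat \<Rightarrow> nat" where
  "rk f i = Suc (card {k. k < length f \<and> lt f k i})"

lemma std_unique:
  assumes s: "is_std f s" and i: "i < length f"
  shows "s ! i = rk f i"
proof -
  let ?n = "length f"
  have len: "length s = ?n" and st: "set s = {1..?n}"
    and mono: "\<And>a b. a < ?n \<Longrightarrow> b < ?n \<Longrightarrow> lt f a b \<Longrightarrow> s ! a < s ! b"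
    using s unfolding is_std_def lt_def by auto
  have "card (set s) = length s" using st len by simp
  hence dist: "distinct s" by (simp add: card_distinct)
  have eq: "{k. k < ?n \<and> lt f k i} = {k. k < ?n \<and> s ! k < s ! i}"
  proof (intro set_eqI iffI; clarsimp)
    fix k assume k: "k < ?n" "lt f k i" thus "s ! k < s ! i" using mono i by auto
  next
    fix k assume k: "k < ?n" "s ! k < s ! i"
    have "k \<noteq> i" using k by auto
    moreover have "\<not> lt f i k" using mono[OF i k(1)] k(2) by fastforce
    ultimately show "lt f k i" unfolding lt_def by auto
  qed
  have "(!) s ` {k. k < ?n \<and> s ! k < s ! i} = {v \<in> set s. v < s ! i}"
    using len by (auto simp: in_set_conv_nth)
  also have "\<dots> = {1..<s ! i}" using st i len nth_mem[of i s] by auto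
  finally have im: "(!) s ` {k. k < ?n \<and> s ! k < s ! i} = {1..<s ! i}" .
  have inj: "inj_on ((!) s) {k. k < ?n \<and> s ! k < s ! i}"
    using dist len by (auto simp: inj_on_def nth_eq_iff_index_eq)
  have "card {k. k < ?n \<and> s ! k < s ! i} = card {1..<s ! i}"
    using card_image[OF inj] im by simp
  moreover have "s ! i \<ge> 1" using st i len nth_mem[of i s] by auto
  ultimately show ?thesis unfolding rk_def eq by simp
qed

lemma lt_trans: "lt f a b \<Longrightarrow> lt f b c \<Longrightarrow> lt f a c"
  unfolding lt_def by auto

lemma rk_mono:
  assumes "a < length f" "b < length f" "lt f a b"
  shows "rk f a < rk f b"
proof -
  have "{k. k < length f \<and> lt f k a} \<subset> {k. k < length f \<and> lt f k b}"
    using assms lt_trans[of f _ a b] by (auto simp: lt_def)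
  hence "card {k. k < length f \<and> lt f k a} < card {k. k < length f \<and> lt f k b}"
    by (rule psubset_card_mono[rotated]) simp
  thus ?thesis unfolding rk_def by simp
qed

lemma std_exists: "is_std f (map (rk f) [0..<length f])"
proof -
  let ?n = "length f"
  let ?s = "map (rk f) [0..<length f]"
  have m: "\<And>a b. a < ?n \<Longrightarrow> b < ?n \<Longrightarrow> lt f a b \<Longrightarrow> ?s ! a < ?s ! b"
    using rk_mono by simp
  have d: "distinct ?s"
  proof -
    have "inj_on (rk f) {0..<?n}"
    proof (rule inj_onI)
      fix a b assume a: "a \<in> {0..<?n}" and b: "b \<in> {0..<?n}" and e: "rk f a = rk f b"
      show "a = b"
      proof (rule ccontr)
        assume "a \<noteq> b"
        hence "lt f a b \<or> lt f b a" unfolding lt_def by auto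
        thus False using rk_mono[of a f b] rk_mono[of b f a] a b e by auto
      qed
    qed
    thus ?thesis by (simp add: distinct_map)
  qed
  have sub: "set ?s \<subseteq> {1..?n}"
  proof
    fix v assume "v \<in> set ?s"
    then obtain i where i: "i < ?n" "v = rk f i" by auto
    have "{k. k < ?n \<and> lt f k i} \<subseteq> {0..<?n} - {i}" by (auto simp: lt_def)
    hence "card {k. k < ?n \<and> lt f k i} \<le> card ({0..<?n} - {i})" by (intro card_mono) auto
    also have "\<dots> = ?n - 1" using i by simp
    finally show "v \<in> {1..?n}" using i unfolding rk_def by auto
  qed
  have "card (set ?s) = ?n" using distinct_card[OF d] by simp
  hence "set ?s = {1..?n}" using sub by (intro card_subset_eq) auto
  thus ?thesis unfolding is_std_def using m by (auto simp: lt_def)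
qed

lemma Std_char: "is_std f s \<Longrightarrow> Std f = s"
proof -
  assume s: "is_std f s"
  have "\<And>t. is_std f t \<Longrightarrow> t = s"
  proof -
    fix t assume t: "is_std f t"
    have "length t = length s" using s t unfolding is_std_def by simp
    moreover have "\<forall>i<length t. t ! i = s ! i"
      using std_unique[OF s] std_unique[OF t] t unfolding is_std_def by auto
    ultimately show "t = s" by (simp add: list_eq_iff_nth_eq)
  qed
  thus ?thesis unfolding Std_def using s by (intro the_equality)
qed

lemma Std_is: "is_std f (Std f)"
  using std_exists Std_char by metis

theorem lemma24:
  shows "(\<forall>g. packed g \<longrightarrow> pw_le g (Std g)) \<and>
         (\<forall>f g. packed f \<and> packed g \<and> pw_le f g \<longrightarrow> Std f = Std g)"
proof (intro conjI allI impI)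
  fix g :: "nat list"
  have s: "is_std g (Std g)" by (rule Std_is)
  show "pw_le g (Std g)"
    unfolding pw_le_def
  proof (intro conjI allI impI)
    show "length g = length (Std g)" using s unfolding is_std_def by simp
  next
    fix i j assume i: "i < length (Std g)" and j: "j < length (Std g)"
    have mono: "\<And>a b. a < length g \<Longrightarrow> b < length g \<Longrightarrow> (g!a < g!b \<longrightarrow> Std g!a < Std g!b) \<and>
        (g!a = g!b \<and> a < b \<longrightarrow> Std g!a < Std g!b)" using s unfolding is_std_def by blast
    have i': "i < length g" and j': "j < length g" using i j s unfolding is_std_def by auto
    show "Std g ! i \<le> Std g ! j \<Longrightarrow> g ! i \<le> g ! j"
      using mono[OF j' i'] by (metis leD linorder_not_le)
    show "Std g ! j < Std g ! i \<and> i < j \<Longrightarrow> g ! j < g ! i"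
      using mono[OF i' j'] mono[OF j' i'] by (metis leD linorder_neqE_nat order_less_asym)
    show "Std g ! i = Std g ! j \<Longrightarrow> g ! i = g ! j"
      using mono[OF i' j'] mono[OF j' i'] by (metis less_irrefl linorder_neqE_nat)
  qed
next
  fix f g :: "nat list"
  assume "packed f \<and> packed g \<and> pw_le f g"
  hence p: "pw_le f g" by simp
  have s: "is_std g (Std g)" by (rule Std_is)
  have "is_std f (Std g)"
    unfolding is_std_def
  proof (intro conjI allI impI)
    show "length (Std g) = length f" using s p unfolding is_std_def pw_le_def by simp
    show "set (Std g) = {1..length f}" using s p unfolding is_std_def pw_le_def by simp
  next
    fix i j assume i: "i < length f" and j: "j < length f"
    have i': "i < length g" and j': "j < length g" using i j p unfolding pw_le_def by auto
    have P: "\<And>a b. a < length g \<Longrightarrow> b < length g \<Longrightarrow> (g ! a \<le> g ! b \<longrightarrow> f ! a \<le> f ! b) \<and>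
        (g ! a > g ! b \<and> a < b \<longrightarrow> f ! a > f ! b)" using p unfolding pw_le_def by blast
    have S: "\<And>a b. a < length g \<Longrightarrow> b < length g \<Longrightarrow> (g!a < g!b \<longrightarrow> Std g!a < Std g!b) \<and>
        (g!a = g!b \<and> a < b \<longrightarrow> Std g!a < Std g!b)" using s unfolding is_std_def by blast
    show "f ! i < f ! j \<Longrightarrow> Std g ! i < Std g ! j"
      using P[OF j' i'] S[OF i' j'] by (metis leD linorder_not_le)
    show "f ! i = f ! j \<and> i < j \<Longrightarrow> Std g ! i < Std g ! j"
      using P[OF i' j'] S[OF i' j'] by (metis linorder_neqE_nat less_irrefl)
  qed
  thus "Std f = Std g" by (rule Std_char)
qed

end
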